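(* Let $d\ge2$, $0<s<d$, regard $\mathbb{R}^d$ as $\mathbb{R}^d\times\{0\}\subset\mathbb{R}^{d+1}$, and let $y=(y_1,\dots,y_{d+1})\in\mathbb{R}^{d+1}$ with $y_{d+1}\ne0$. The weak balayage $\delta_y^w$ of $\delta_y$ onto $\mathbb{R}^d$ is given by $$d\delta_y^w(x)=\frac{(2|y_{d+1}|)^{d-s}}{\omega_d\,W(S^d)\,|x-y|^{2d-s}}\,dx,$$ where $dx$ is Lebesgue measure on $\mathbb{R}^d$, and $\|\delta_y^w\|=\|\delta_y\|=1$. Furthermore, if $\nu$ is a signed measure of finite mass with support in $\mathbb{R}^{d+1}\setminus\mathbb{R}^d$ (not necessarily compact), its weak balayage is given by the superposition $$d\nu^w(x)=\Bigl(\int_{S_\nu}\delta_y^w(x)\,d\nu(y)\Bigr)dx,$$ where $\delta_y^w(x)$ denotes the density above.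
   Context: $U^\sigma(x)=\int|x-t|^{-s}d\sigma(t)$ for measures on $\mathbb{R}^{d+1}$. For a positive measure $\sigma$ of finite mass, a weak balayage $\sigma^w$ onto $\mathbb{R}^d$ is a positive measure on $\mathbb{R}^d$ with $U^{\sigma^w}=U^\sigma$ quasi-everywhere on $\mathbb{R}^d$ (i.e. outside a set of zero Riesz $s$-capacity); for a signed measure $\nu=\nu^+-\nu^-$, $\nu^w=(\nu^+)^w-(\nu^-)^w$. $\omega_d=2\pi^{(d+1)/2}/\Gamma((d+1)/2)$ is the surface area of the unit sphere $S^d\subset\mathbb{R}^{d+1}$, and $W(S^d)$ is its Riesz $s$-energy: $W(S^d)=\frac{\Gamma(\frac{d+1}{2})\Gamma(d-s)}{\Gamma(\frac{d-s+1}{2})\Gamma(d-\frac{s}{2})}$ for $d\ge3$, and $W(S^2)=2^{1-s}/(2-s)$ for $d=2$. $S_\nu$ is the support of $\nu$. *)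

theory Defs
  imports "HOL-Analysis.Analysis" "HOL-Probability.Giry_Monad"
begin

text \<open>R^d is real^'n with d = CARD('n); R^(d+1) is (real^'n) \<times> real, whose product
  norm is the Euclidean one; R^d is embedded as x \<mapsto> (x, 0).\<close>

definition emb :: "real^'n \<Rightarrow> (real^'n) \<times> real" where
  "emb x = (x, 0)"

definition riesz_kernel :: "real \<Rightarrow> 'a::metric_space \<Rightarrow> 'a \<Rightarrow> ennreal" where
  "riesz_kernel s x t = (if x = t then \<infinity> else ennreal (dist x t powr (-s)))"

definition riesz_pot :: "real \<Rightarrow> 'a::metric_space measure \<Rightarrow> 'a \<Rightarrow> ennreal" where
  "riesz_pot s \<mu> x = (\<integral>\<^sup>+ t. riesz_kernel s x t \<partial>\<mu>)"

definition riesz_energy :: "real \<Rightarrow> 'a::metric_space measure \<Rightarrow> ennreal" where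
  "riesz_energy s \<mu> = (\<integral>\<^sup>+ x. (\<integral>\<^sup>+ t. riesz_kernel s x t \<partial>\<mu>) \<partial>\<mu>)"

definition riesz_cap_zero :: "real \<Rightarrow> (real^'n) set \<Rightarrow> bool" where
  "riesz_cap_zero s E \<longleftrightarrow>
     (\<forall>K (\<mu> :: (real^'n) measure). compact K \<and> K \<subseteq> E \<and> sets \<mu> = sets borel \<and>
        emeasure \<mu> UNIV < \<infinity> \<and> emeasure \<mu> (UNIV - K) = 0 \<and> riesz_energy s \<mu> < \<infinity>
        \<longrightarrow> emeasure \<mu> UNIV = 0)"

definition weak_balayage ::
  "real \<Rightarrow> ((real^'n) \<times> real) measure \<Rightarrow> (real^'n) measure \<Rightarrow> bool" where
  "weak_balayage s \<sigma> \<mu> \<longleftrightarrow> sets \<mu> = sets borel \<and>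
     riesz_cap_zero s {x. riesz_pot s \<mu> x \<noteq> riesz_pot s \<sigma> (emb x)}"

definition msupport :: "'a::topological_space measure \<Rightarrow> 'a set" where
  "msupport \<mu> = {z. \<forall>U. open U \<and> z \<in> U \<longrightarrow> emeasure \<mu> U > 0}"

definition omega_d :: "nat \<Rightarrow> real" where
  "omega_d d = 2 * pi powr ((real d + 1) / 2) / Gamma ((real d + 1) / 2)"

definition W_sphere :: "nat \<Rightarrow> real \<Rightarrow> real" where
  "W_sphere d s = (if d = 2 then 2 powr (1 - s) / (2 - s)
     else Gamma ((real d + 1) / 2) * Gamma (real d - s) /
          (Gamma ((real d - s + 1) / 2) * Gamma (real d - s / 2)))"

definition bal_density :: "real \<Rightarrow> (real^'n) \<times> real \<Rightarrow> real^'n \<Rightarrow> real" where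
  "bal_density s y x = (2 * \<bar>snd y\<bar>) powr (real CARD('n) - s) /
     (omega_d CARD('n) * W_sphere CARD('n) s * dist (emb x) y powr (2 * real CARD('n) - s))"

definition delta_w :: "real \<Rightarrow> (real^'n) \<times> real \<Rightarrow> (real^'n) measure" where
  "delta_w s y = density lborel (\<lambda>x. ennreal (bal_density s y x))"

end

theory Submission
  imports Defs "HOL-Probability.Probability"
begin


lemma gauss1:
  fixes c m :: real assumes c: "c > 0"
  shows "(\<integral>\<^sup>+t. ennreal (exp (-(c*(t-m)^2))) \<partial>lborel) = ennreal (sqrt (pi/c))"
proof -
  define \<sigma> where "\<sigma> = sqrt (1/(2*c))"
  have s: "\<sigma> > 0" "2*\<sigma>^2 = 1/c" using c by (auto simp: \<sigma>_def)
  have "(\<integral>\<^sup>+t. ennreal (normal_density m \<sigma> t) \<partial>lborel) = 1"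
    using s(1) by (subst nn_integral_eq_integral) auto
  moreover have "\<And>t. ennreal (exp (-(c*(t-m)^2))) = ennreal (sqrt (pi/c)) * ennreal (normal_density m \<sigma> t)"
  proof -
    fix t
    have "sqrt (2*pi*\<sigma>^2) = sqrt (pi/c)" using s by (simp add: field_simps)
    moreover have "(- ((t-m)^2)) / (2 * \<sigma>^2) = - (c*(t-m)^2)" using s c by (simp add: field_simps)
    ultimately have "sqrt (pi/c) * normal_density m \<sigma> t = exp (-(c*(t-m)^2))"
      using c by (simp add: normal_density_def)
    then show "ennreal (exp (-(c*(t-m)^2))) = ennreal (sqrt (pi/c)) * ennreal (normal_density m \<sigma> t)"
      by (metis ennreal_mult'' normal_density_nonneg)
  qed
  ultimately show ?thesis
    by (simp add: nn_integral_cmult)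
qed

lemma gauss2:
  fixes u v a b :: real assumes u: "u \<ge> 0" and v: "v > 0"
  shows "(\<integral>\<^sup>+t. ennreal (exp (-(u*(a-t)^2 + v *(t-b)^2))) \<partial>lborel)
     = ennreal (sqrt (pi/(u+v)) * exp (-(u* v/(u+v)*(a-b)^2)))"
proof -
  define m where "m = (u*a+v *b)/(u+v)"
  have uv: "u+v > 0" using u v by simp
  have eq: "\<And>t. u*(a-t)^2 + v *(t-b)^2 = (u+v)*(t-m)^2 + u* v/(u+v)*(a-b)^2"
  proof -
    fix t
    have e1: "(u+v)*(u*(a-t)^2 + v * (t-b)^2) = ((u+v)*t - (u*a+v * b))^2 + u * v * (a-b)^2" by algebra
    have e2: "(u+v)*t - (u*a+v * b) = (u+v)*(t-m)" using uv by (simp add: m_def field_simps)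
    have "(u+v)*(u*(a-t)^2 + v * (t-b)^2) = (u+v)*((u+v)*(t-m)^2 + u * v/(u+v)*(a-b)^2)"
      unfolding e1 e2 using uv by (simp add: field_simps power2_eq_square)
    then show "u*(a-t)^2 + v * (t-b)^2 = (u+v)*(t-m)^2 + u * v/(u+v)*(a-b)^2" using uv by simp
  qed
  have "(\<integral>\<^sup>+t. ennreal (exp (-(u*(a-t)^2 + v *(t-b)^2))) \<partial>lborel)
      = (\<integral>\<^sup>+t. ennreal (exp (-(u* v/(u+v)*(a-b)^2))) * ennreal (exp (-((u+v)*(t-m)^2))) \<partial>lborel)"
    by (intro nn_integral_cong) (simp add: eq exp_add[symmetric] ennreal_mult''[symmetric] algebra_simps)
  also have "\<dots> = ennreal (exp (-(u* v/(u+v)*(a-b)^2))) * ennreal (sqrt (pi/(u+v)))"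
    by (simp add: nn_integral_cmult gauss1[OF uv])
  finally show ?thesis by (simp add: ennreal_mult''[symmetric] mult.commute)
qed

lemma gaussD:
  fixes x y :: "'a::euclidean_space" and u v :: real
  assumes u: "u \<ge> 0" and v: "v > 0"
  shows "(\<integral>\<^sup>+t. ennreal (exp (-(u*(norm (x-t))^2 + v *(norm (t-y))^2))) \<partial>lborel)
     = ennreal ((pi/(u+v)) powr (DIM('a)/2) * exp (-(u* v/(u+v)*(norm (x-y))^2)))"
proof -
  have n2: "\<And>z::'a. (norm z)^2 = (\<Sum>b\<in>Basis. (z\<bullet>b)^2)"
    by (subst power2_norm_eq_inner, subst euclidean_inner) (simp add: power2_eq_square)
  have "\<And>t. ennreal (exp (-(u*(norm (x-t))^2 + v *(norm (t-y))^2)))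
      = (\<Prod>b\<in>Basis. ennreal (exp (-(u*(x\<bullet>b - t\<bullet>b)^2 + v *(t\<bullet>b - y\<bullet>b)^2))))"
  proof -
    fix t
    have "-(u*(norm (x-t))^2 + v * (norm (t-y))^2) = (\<Sum>b\<in>Basis. -(u*(x\<bullet>b - t\<bullet>b)^2 + v * (t\<bullet>b - y\<bullet>b)^2))"
      by (simp add: n2 sum_distrib_left sum.distrib sum_negf sum_subtractf inner_diff_left)
    then show "ennreal (exp (-(u*(norm (x-t))^2 + v * (norm (t-y))^2)))
      = (\<Prod>b\<in>Basis. ennreal (exp (-(u*(x\<bullet>b - t\<bullet>b)^2 + v * (t\<bullet>b - y\<bullet>b)^2))))"
      by (simp add: prod_ennreal exp_sum)
  qed
  then have "(\<integral>\<^sup>+t. ennreal (exp (-(u*(norm (x-t))^2 + v *(norm (t-y))^2))) \<partial>lborel)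
      = (\<Prod>b\<in>Basis. \<integral>\<^sup>+z. ennreal (exp (-(u*(x\<bullet>b - z)^2 + v *(z - y\<bullet>b)^2))) \<partial>lborel)"
    by (simp only:) (rule nn_integral_lborel_prod, auto)
  also have "\<dots> = (\<Prod>b\<in>Basis. ennreal (sqrt (pi/(u+v)) * exp (-(u* v/(u+v)*(x\<bullet>b-y\<bullet>b)^2))))"
    by (rule prod.cong[OF refl], rule gauss2[OF u v])
  also have "\<dots> = ennreal (sqrt (pi/(u+v)) ^ DIM('a) * exp (-(u* v/(u+v)*(norm (x-y))^2)))"
    using u v by (simp add: prod_ennreal prod.distrib exp_sum[symmetric] n2 sum_distrib_left sum_negf inner_diff_left)
  also have "sqrt (pi/(u+v)) ^ DIM('a) = (pi/(u+v)) powr (DIM('a)/2)"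
    using u v by (simp add: sqrt_def root_powr_inverse powr_realpow[symmetric] powr_powr)
  finally show ?thesis .
qed
lemma gamma_nn1:
  fixes c :: real assumes c: "c > 0"
  shows "(\<integral>\<^sup>+w. ennreal (indicator {0<..} w * (w powr (c-1) * exp (-w))) \<partial>lborel) = ennreal (Gamma c)"
proof -
  have "((\<lambda>t. t powr (c - 1) / exp t) has_integral Gamma c) {0..}" by (rule Gamma_integral_real[OF c])
  then have "((\<lambda>t. if t \<in> {0..} then t powr (c - 1) / exp t else 0) has_integral Gamma c) UNIV"
    by (simp only: has_integral_restrict_UNIV)
  moreover have "(\<lambda>t::real. if t \<in> {0..} then t powr (c - 1) / exp t else 0) = (\<lambda>w. indicator {0<..} w * (w powr (c-1) * exp (-w)))"
    by (auto simp: fun_eq_iff indicator_def exp_minus field_simps)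
  ultimately have "((\<lambda>w. indicator {0<..} w * (w powr (c-1) * exp (-w))) has_integral Gamma c) UNIV" by simp
  then show ?thesis
    by (subst nn_integral_has_integral_lborel) auto
qed

lemma gamma_nn:
  fixes c l :: real assumes c: "c > 0" and l: "l > 0"
  shows "(\<integral>\<^sup>+w. ennreal (indicator {0<..} w * (w powr (c-1) * exp (-(l*w)))) \<partial>lborel) = ennreal (Gamma c * l powr (-c))"
proof -
  let ?g = "\<lambda>w. ennreal (indicator {0<..} w * (w powr (c-1) * exp (-(l*w))))"
  have "(\<integral>\<^sup>+w. ?g w \<partial>lborel) = ennreal \<bar>1/l\<bar> * (\<integral>\<^sup>+w. ?g (0 + (1/l) * w) \<partial>lborel)"
    using l by (intro nn_integral_real_affine) auto
  also have "(\<lambda>w. ?g (0 + (1/l) * w)) = (\<lambda>w. ennreal (l powr (1-c)) * ennreal (indicator {0<..} w * (w powr (c-1) * exp (-w))))"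
    using l by (auto simp: fun_eq_iff indicator_def ennreal_mult''[symmetric] powr_divide powr_diff field_simps)
  also have "ennreal \<bar>1/l\<bar> * (\<integral>\<^sup>+w. ennreal (l powr (1-c)) * ennreal (indicator {0<..} w * (w powr (c-1) * exp (-w))) \<partial>lborel)
     = ennreal (1/l) * ennreal (l powr (1-c)) * ennreal (Gamma c)"
    using l by (simp add: nn_integral_cmult gamma_nn1[OF c] mult.assoc)
  also have "\<dots> = ennreal (Gamma c * l powr (-c))"
    using l c by (simp add: ennreal_mult''[symmetric] powr_diff powr_minus field_simps)
  finally show ?thesis .
qed

lemma gamma_rep:
  fixes c z :: real assumes c: "c > 0" and z: "z > 0"
  shows "ennreal (z powr (-c)) = ennreal (1 / Gamma c) *
      (\<integral>\<^sup>+w. ennreal (indicator {0<..} w * (w powr (c-1) * exp (-(z*w)))) \<partial>lborel)"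
proof -
  have "Gamma c \<noteq> 0" using Gamma_real_pos[OF c] by linarith
  then show ?thesis using c z by (simp add: gamma_nn ennreal_mult''[symmetric])
qed

lemma gaussD0:
  fixes y :: "'a::euclidean_space" and v :: real assumes v: "v > 0"
  shows "(\<integral>\<^sup>+t. ennreal (exp (-(v * (norm (t-y))^2))) \<partial>lborel) = ennreal ((pi/v) powr (DIM('a)/2))"
  using gaussD[of 0 v y y] v by simp

lemma swap_lb:
  fixes f :: "'a::euclidean_space \<Rightarrow> 'b::euclidean_space \<Rightarrow> ennreal"
  assumes "(\<lambda>(x,y). f x y) \<in> borel_measurable (lborel \<Otimes>\<^sub>M lborel)"
  shows "(\<integral>\<^sup>+x. \<integral>\<^sup>+y. f x y \<partial>lborel \<partial>lborel) = (\<integral>\<^sup>+y. \<integral>\<^sup>+x. f x y \<partial>lborel \<partial>lborel)"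
proof -
  have "pair_sigma_finite (lborel :: 'a measure) (lborel :: 'b measure)" by intro_locales
  from pair_sigma_finite.Fubini'[OF this assms] show ?thesis by simp
qed

lemma mass_core:
  fixes y0 :: "'a::euclidean_space" and s H :: real
  assumes s: "0 < s" "s < DIM('a)" and H: "H > 0"
  shows "(\<integral>\<^sup>+t. ennreal (((norm (t-y0))^2 + H) powr (-(DIM('a) - s/2))) \<partial>lborel)
    = ennreal (pi powr (DIM('a)/2) * Gamma ((DIM('a)-s)/2) / Gamma (DIM('a) - s/2) * H powr (-((DIM('a)-s)/2)))"
proof -
  define a where "a = DIM('a) - s/2"
  define D where "D = DIM('a)/2"
  have a: "a > 0" "a - D > 0" using s by (auto simp: a_def D_def)
  have "(\<integral>\<^sup>+t. ennreal (((norm (t-y0))^2 + H) powr (-a)) \<partial>lborel)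
     = (\<integral>\<^sup>+t. ennreal (1/Gamma a) * (\<integral>\<^sup>+v. ennreal (indicator {0<..} v * (v powr (a-1) * exp (-(((norm (t-y0))^2 + H)* v)))) \<partial>lborel) \<partial>lborel)"
    using a H by (intro nn_integral_cong gamma_rep) (auto intro: add_nonneg_pos)
  also have "\<dots> = ennreal (1/Gamma a) * (\<integral>\<^sup>+t. (\<integral>\<^sup>+v. ennreal (indicator {0<..} v * (v powr (a-1) * exp (-(((norm (t-y0))^2 + H)* v)))) \<partial>lborel) \<partial>lborel)"
    by (rule nn_integral_cmult) measurable
  also have "(\<integral>\<^sup>+t. (\<integral>\<^sup>+v. ennreal (indicator {0<..} v * (v powr (a-1) * exp (-(((norm (t-y0))^2 + H)* v)))) \<partial>lborel) \<partial>lborel)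
     = (\<integral>\<^sup>+v. (\<integral>\<^sup>+t. ennreal (indicator {0<..} v * (v powr (a-1) * exp (-(((norm (t-y0))^2 + H)* v)))) \<partial>lborel) \<partial>lborel)"
    by (rule swap_lb) measurable
  also have "\<dots> = (\<integral>\<^sup>+v. ennreal (pi powr D * (indicator {0<..} v * (v powr (a-D-1) * exp (-(H* v))))) \<partial>lborel)"
  proof (rule nn_integral_cong)
    fix v :: real
    show "(\<integral>\<^sup>+t. ennreal (indicator {0<..} v * (v powr (a-1) * exp (-(((norm (t-y0))^2 + H)* v)))) \<partial>lborel)
      = ennreal (pi powr D * (indicator {0<..} v * (v powr (a-D-1) * exp (-(H* v)))))"
    proof (cases "v > 0")
      case True
      have "(\<integral>\<^sup>+t. ennreal (indicator {0<..} v * (v powr (a-1) * exp (-(((norm (t-y0))^2 + H)* v)))) \<partial>lborel)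
        = (\<integral>\<^sup>+t. ennreal (v powr (a-1) * exp (-(H* v))) * ennreal (exp (-(0*(norm (y0-t))^2 + v * (norm (t-y0))^2))) \<partial>lborel)"
        using True by (intro nn_integral_cong) (simp add: ennreal_mult''[symmetric] exp_add[symmetric] algebra_simps)
      also have "\<dots> = ennreal (v powr (a-1) * exp (-(H* v))) * ennreal ((pi/(0+v)) powr (DIM('a)/2) * exp (-(0 * v/(0+v)*(norm (y0-y0))^2)))"
        using True by (subst nn_integral_cmult) (auto simp: gaussD0)
      also have "\<dots> = ennreal (pi powr D * (indicator {0<..} v * (v powr (a-D-1) * exp (-(H* v)))))"
      proof -
        have e: "v powr (a-1) = v powr D * v powr (a-D-1)" by (subst powr_add[symmetric]) simp
        show ?thesis using True
          by (simp add: ennreal_mult''[symmetric] D_def[symmetric] powr_divide e field_simps)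
      qed
      finally show ?thesis .
    qed simp
  qed
  also have "\<dots> = (\<integral>\<^sup>+v. ennreal (pi powr D) * ennreal (indicator {0<..} v * (v powr (a-D-1) * exp (-(H * v)))) \<partial>lborel)"
    by (rule nn_integral_cong, rule ennreal_mult'') auto
  also have "\<dots> = ennreal (pi powr D) * (\<integral>\<^sup>+v. ennreal (indicator {0<..} v * (v powr (a-D-1) * exp (-(H * v)))) \<partial>lborel)"
    by (rule nn_integral_cmult) measurable
  also have "\<dots> = ennreal (pi powr D) * ennreal (Gamma (a-D) * H powr (-(a-D)))"
    by (subst gamma_nn) (use a H in auto)
  finally have "(\<integral>\<^sup>+t. ennreal (((norm (t-y0))^2 + H) powr (-a)) \<partial>lborel)
     = ennreal (1/Gamma a) * (ennreal (pi powr D) * ennreal (Gamma (a-D) * H powr (-(a-D))))" .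
  also have "\<dots> = ennreal (pi powr D * Gamma (a-D) / Gamma a * H powr (-(a-D)))"
    using a by (simp add: ennreal_mult''[symmetric])
  also have "a - D = (DIM('a)-s)/2" by (simp add: a_def D_def field_simps)
  finally show ?thesis by (simp add: a_def D_def)
qed

lemma dup_real:
  fixes z :: real assumes z: "z > 0"
  shows "Gamma z * Gamma (z + 1/2) = 2 powr (1 - 2*z) * sqrt pi * Gamma (2*z)"
proof -
  have e: "complex_of_real z + 1/2 = complex_of_real (z + 1/2)" by simp
  have n1: "complex_of_real z \<notin> \<int>\<^sub>\<le>\<^sub>0" using z by (auto simp: of_real_in_nonpos_Ints_iff)
  have n2: "complex_of_real z + 1/2 \<notin> \<int>\<^sub>\<le>\<^sub>0"
  proof -
    have "z + 1/2 \<notin> \<int>\<^sub>\<le>\<^sub>0" using z by auto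
    then show ?thesis unfolding e of_real_in_nonpos_Ints_iff .
  qed
  have c1: "Gamma (complex_of_real z) = complex_of_real (Gamma z)" by (rule Gamma_complex_of_real)
  have c2: "Gamma (complex_of_real z + 1/2) = complex_of_real (Gamma (z + 1/2))"
    unfolding e by (rule Gamma_complex_of_real)
  have e2: "2 * complex_of_real z = complex_of_real (2*z)" by simp
  have c3: "Gamma (2 * complex_of_real z) = complex_of_real (Gamma (2*z))"
    unfolding e2 by (rule Gamma_complex_of_real)
  have e3: "(1 - 2*complex_of_real z) * complex_of_real (ln 2) = complex_of_real ((1 - 2*z) * ln 2)" by simp
  have c4: "exp ((1 - 2*complex_of_real z) * complex_of_real (ln 2)) = complex_of_real (2 powr (1 - 2*z))"
    unfolding e3 exp_of_real by (simp add: powr_def)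
  have "complex_of_real (Gamma z * Gamma (z + 1/2)) = complex_of_real (2 powr (1 - 2*z) * sqrt pi * Gamma (2*z))"
    using Gamma_legendre_duplication[OF n1 n2] unfolding c1 c2 c3 c4 of_real_mult .
  then show ?thesis by (simp only: of_real_eq_iff)
qed

lemma const_eq:
  fixes d :: nat and s :: real
  assumes d: "d \<ge> 2" and s: "0 < s" "s < d"
  shows "omega_d d * W_sphere d s = 2 powr (d - s) * (pi powr (d/2) * Gamma ((d-s)/2) / Gamma (d - s/2))"
proof (cases "d = 2")
  case True
  have g32: "Gamma (3/2 :: real) = sqrt pi / 2"
  proof -
    have "(1/2::real) \<notin> \<int>\<^sub>\<le>\<^sub>0" by auto
    then show ?thesis using Gamma_plus1[of "1/2::real"] by (simp add: Gamma_one_half_real)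
  qed
  have ns: "(2-s)/2 \<notin> \<int>\<^sub>\<le>\<^sub>0" using s True by auto
  have A: "Gamma (real d - s/2) = ((2-s)/2) * Gamma ((2-s)/2)"
  proof -
    have "real d - s/2 = (2-s)/2 + 1" using True by simp
    then show ?thesis using Gamma_plus1[of "(2-s)/2"] ns by simp
  qed
  have B: "(real d - s)/2 = (2-s)/2" using True by simp
  have C: "(real d + 1)/2 = 3/2" using True by simp
  have P: "Gamma ((2-s)/2) > 0" using s True by (intro Gamma_real_pos) simp
  have pp: "pi powr (3/2) = pi * sqrt pi"
    using powr_add[of pi 1 "1/2"] by (simp add: powr_half_sqrt)
  have tp: "(2::real) powr (real d - s) = 2 * 2 powr (1 - s)"
    using True powr_add[of 2 1 "1-s"] by simp
  have "omega_d d * W_sphere d s = 2 * pi powr (3/2) / Gamma (3/2) * (2 powr (1 - s) / (2 - s))"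
    unfolding omega_d_def W_sphere_def C using True by simp
  also have "\<dots> = 2 powr (real d - s) * (pi powr (real d/2) * Gamma ((real d - s)/2) / Gamma (real d - s/2))"
  proof -
    have q: "Gamma ((2-s)/2) / ((2-s)/2 * Gamma ((2-s)/2)) = 1/((2-s)/2)"
      using P by (intro nonzero_divide_mult_cancel_right) simp
    have pd: "pi powr (real d/2) = pi" using True by simp
    have L: "2 * (pi * sqrt pi) / (sqrt pi / 2) = 4*pi" by simp
    have R: "pi * Gamma ((2-s)/2) / ((2-s)/2 * Gamma ((2-s)/2)) = 2*pi/(2-s)"
      using q s True by (simp add: times_divide_eq_right[symmetric] del: times_divide_eq_right) simp
    show ?thesis unfolding A B tp pd pp g32 L R
      by (simp add: field_simps)
  qed
  finally show ?thesis .
next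
  case False
  define z where "z = (d - s)/2"
  have z: "z > 0" using s by (simp add: z_def)
  have dup: "Gamma z * Gamma (z + 1/2) = 2 powr (1 - 2*z) * sqrt pi * Gamma (2*z)" by (rule dup_real[OF z])
  have e1: "2*z = d - s" "z + 1/2 = (d - s + 1)/2" by (simp_all add: z_def field_simps)
  have pos: "Gamma ((real d+1)/2) > 0" "Gamma ((real d - s + 1)/2) > 0" "Gamma (real d - s/2) > 0" "Gamma z > 0"
    using s z by (auto intro!: Gamma_real_pos)
  have pp: "pi powr ((real d + 1)/2) = pi powr (d/2) * sqrt pi"
  proof -
    have e: "(real d + 1)/2 = real d/2 + 1/2" by (simp add: field_simps)
    show ?thesis unfolding e powr_add by (simp add: powr_half_sqrt)
  qed
  have tp: "(2::real) powr (d - s) = 2 * 2 powr (2*z - 1)" by (simp add: e1(1)[symmetric] powr_diff)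
  have tp2: "(2::real) powr (1 - 2*z) * 2 powr (2*z - 1) = 1" by (simp add: powr_add[symmetric])
  have G: "Gamma (real d - s) = Gamma z * Gamma ((real d - s + 1)/2) * 2 powr (2*z - 1) / sqrt pi"
    using dup tp2 unfolding e1 by (simp add: field_simps)
  have "omega_d d * W_sphere d s = 2 * pi powr ((real d+1)/2) * Gamma (real d - s) / (Gamma ((real d - s + 1)/2) * Gamma (real d - s/2))"
  proof -
    have nz: "Gamma ((real d+1)/2) \<noteq> 0" using pos(1) by linarith
    show ?thesis unfolding omega_d_def W_sphere_def using False nz by simp
  qed
  also have "\<dots> = 2 powr (real d - s) * (pi powr (real d/2) * Gamma ((real d - s)/2) / Gamma (real d - s/2))"
    unfolding G pp tp z_def[symmetric] using pos by (simp add: field_simps)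
  finally show ?thesis .
qed

lemma r_alg: "(Gb::real) \<noteq> 0 \<Longrightarrow> Ga \<noteq> 0 \<Longrightarrow> 1/Ga * (1/Gb) * ((pD * Gb * P) * (Gdb * Q)) = pD * Gdb / Ga * P * Q"
  by (simp add: field_simps)

lemma pot_core:
  fixes x y0 :: "'a::euclidean_space" and s H :: real
  assumes s: "0 < s" "s < DIM('a)" and H: "H > 0"
  shows "(\<integral>\<^sup>+t. ennreal (((norm (t-y0))^2 + H) powr (-(DIM('a) - s/2)) * norm (x-t) powr (-s)) \<partial>lborel)
    = ennreal (pi powr (DIM('a)/2) * Gamma ((DIM('a)-s)/2) / Gamma (DIM('a) - s/2)
         * ((norm (x-y0))^2 + H) powr (-(s/2)) * H powr (-((DIM('a)-s)/2)))"
proof -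
  define a where "a = DIM('a) - s/2"
  define b where "b = s/2"
  define D where "D = DIM('a)/2"
  define K where "K = (norm (x-y0))^2"
  have a: "a > 0" "b > 0" "D - b > 0" "D > 0" "a + b = 2*D" using s by (auto simp: a_def D_def b_def)
  have K: "K \<ge> 0" by (simp add: K_def)
  define c1 where "c1 = 1 / Gamma a * (1 / Gamma b)"
  let ?Phi = "\<lambda>t v u. indicator {0<..} v * indicator {0<..} u * (v powr (a-1) * u powr (b-1) * exp (-(H * v))
     * exp (-(u * (norm (x-t))^2 + v * (norm (t-y0))^2)))"
  let ?Psi = "\<lambda>v u. indicator {0<..} v * indicator {0<..} u * (v powr (a-1) * u powr (b-1) * exp (-(H * v))
     * ((pi/(u+v)) powr D * exp (-(u * v/(u+v)*K))))"
  let ?Theta = "\<lambda>v q. indicator {0<..} v * indicator {0<..} q * (pi powr D * v powr (D-1) * q powr (b-1)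
     * (1+q) powr (-D) * exp (-((H + q*K/(1+q)) * v)))"
  let ?Xi = "\<lambda>q w. indicator {0<..} q * indicator {0<..} w * (pi powr D * q powr (b-1) * w powr (D-1)
     * exp (-(H*w)) * exp (-((w*(H+K)) * q)))"
  have step1: "ennreal (((norm (t-y0))^2 + H) powr (-a) * norm (x-t) powr (-s))
     = ennreal c1 * (\<integral>\<^sup>+v. \<integral>\<^sup>+u. ennreal (?Phi t v u) \<partial>lborel \<partial>lborel)" if tx: "t \<noteq> x" for t
  proof -
    define z1 where "z1 = (norm (t-y0))^2 + H"
    define r where "r = norm (x-t)"
    have z1: "z1 > 0" using H by (simp add: z1_def add_nonneg_pos)
    have r: "r > 0" using tx by (simp add: r_def)
    have e1: "r powr (-s) = (r^2) powr (-b)"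
    proof -
      have "(r^2) powr (-b) = (r powr 2) powr (-b)" using r by simp
      also have "\<dots> = r powr (2*(-b))" by (rule powr_powr)
      also have "2*(-b) = -s" by (simp add: b_def)
      finally show ?thesis by simp
    qed
    have "ennreal (z1 powr (-a) * r powr (-s)) = ennreal (z1 powr (-a)) * ennreal ((r^2) powr (-b))"
      by (simp add: e1 ennreal_mult'')
    also have "\<dots> = (ennreal (1 / Gamma a) * (\<integral>\<^sup>+v. ennreal (indicator {0<..} v * (v powr (a-1) * exp (-(z1* v)))) \<partial>lborel))
       * (ennreal (1 / Gamma b) * (\<integral>\<^sup>+u. ennreal (indicator {0<..} u * (u powr (b-1) * exp (-(r^2*u)))) \<partial>lborel))"
      using a z1 r by (simp add: gamma_rep[symmetric])
    also have "\<dots> = ennreal c1 * ((\<integral>\<^sup>+v. ennreal (indicator {0<..} v * (v powr (a-1) * exp (-(z1* v)))) \<partial>lborel)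
       * (\<integral>\<^sup>+u. ennreal (indicator {0<..} u * (u powr (b-1) * exp (-(r^2*u)))) \<partial>lborel))"
    proof -
      have c1e: "ennreal c1 = ennreal (1/Gamma a) * ennreal (1/Gamma b)"
        unfolding c1_def by (rule ennreal_mult) (use a in auto)
      show ?thesis by (simp only: c1e mult_ac)
    qed
    also have "(\<integral>\<^sup>+v. ennreal (indicator {0<..} v * (v powr (a-1) * exp (-(z1* v)))) \<partial>lborel)
       * (\<integral>\<^sup>+u. ennreal (indicator {0<..} u * (u powr (b-1) * exp (-(r^2*u)))) \<partial>lborel)
       = (\<integral>\<^sup>+v. ennreal (indicator {0<..} v * (v powr (a-1) * exp (-(z1* v))))
           * (\<integral>\<^sup>+u. ennreal (indicator {0<..} u * (u powr (b-1) * exp (-(r^2*u)))) \<partial>lborel) \<partial>lborel)"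
      by (rule nn_integral_multc[symmetric]) measurable
    also have "\<dots> = (\<integral>\<^sup>+v. \<integral>\<^sup>+u. ennreal (indicator {0<..} v * (v powr (a-1) * exp (-(z1* v))))
           * ennreal (indicator {0<..} u * (u powr (b-1) * exp (-(r^2*u)))) \<partial>lborel \<partial>lborel)"
      by (intro nn_integral_cong nn_integral_cmult[symmetric]) measurable
    also have "\<dots> = (\<integral>\<^sup>+v. \<integral>\<^sup>+u. ennreal (?Phi t v u) \<partial>lborel \<partial>lborel)"
    proof (intro nn_integral_cong)
      fix v u :: real
      have "exp (-(z1* v)) * exp (-(r^2*u)) = exp (-(H * v)) * exp (-(u * (norm (x-t))^2 + v * (norm (t-y0))^2))"
        by (simp add: z1_def r_def exp_add[symmetric] algebra_simps)
      then show "ennreal (indicator {0<..} v * (v powr (a-1) * exp (-(z1* v))))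
           * ennreal (indicator {0<..} u * (u powr (b-1) * exp (-(r^2*u)))) = ennreal (?Phi t v u)"
        by (simp add: ennreal_mult''[symmetric] mult_ac)
    qed
    finally show ?thesis by (simp add: z1_def r_def)
  qed
  have "(\<integral>\<^sup>+t. ennreal (((norm (t-y0))^2 + H) powr (-a) * norm (x-t) powr (-s)) \<partial>lborel)
      = (\<integral>\<^sup>+t. ennreal c1 * (\<integral>\<^sup>+v. \<integral>\<^sup>+u. ennreal (?Phi t v u) \<partial>lborel \<partial>lborel) \<partial>lborel)"
    by (intro nn_integral_cong_AE eventually_mono[OF AE_lborel_singleton[of x]] step1) simp
  also have "\<dots> = ennreal c1 * (\<integral>\<^sup>+t. \<integral>\<^sup>+v. \<integral>\<^sup>+u. ennreal (?Phi t v u) \<partial>lborel \<partial>lborel \<partial>lborel)"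
    by (rule nn_integral_cmult) measurable
  also have "(\<integral>\<^sup>+t. \<integral>\<^sup>+v. \<integral>\<^sup>+u. ennreal (?Phi t v u) \<partial>lborel \<partial>lborel \<partial>lborel)
     = (\<integral>\<^sup>+v. \<integral>\<^sup>+t. \<integral>\<^sup>+u. ennreal (?Phi t v u) \<partial>lborel \<partial>lborel \<partial>lborel)"
    by (rule swap_lb) measurable
  also have "\<dots> = (\<integral>\<^sup>+v. \<integral>\<^sup>+u. \<integral>\<^sup>+t. ennreal (?Phi t v u) \<partial>lborel \<partial>lborel \<partial>lborel)"
    by (intro nn_integral_cong swap_lb) measurable
  also have "\<dots> = (\<integral>\<^sup>+v. \<integral>\<^sup>+u. ennreal (?Psi v u) \<partial>lborel \<partial>lborel)"
  proof (intro nn_integral_cong)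
    fix v u :: real
    show "(\<integral>\<^sup>+t. ennreal (?Phi t v u) \<partial>lborel) = ennreal (?Psi v u)"
    proof (cases "v > 0 \<and> u > 0")
      case True
      have "(\<integral>\<^sup>+t. ennreal (?Phi t v u) \<partial>lborel) = (\<integral>\<^sup>+t. ennreal (v powr (a-1) * u powr (b-1) * exp (-(H * v)))
          * ennreal (exp (-(u * (norm (x-t))^2 + v * (norm (t-y0))^2))) \<partial>lborel)"
        using True by (intro nn_integral_cong) (simp add: ennreal_mult''[symmetric])
      also have "\<dots> = ennreal (v powr (a-1) * u powr (b-1) * exp (-(H * v)))
          * ennreal ((pi/(u+v)) powr (DIM('a)/2) * exp (-(u * v/(u+v)*(norm (x-y0))^2)))"
        using True gaussD[of u v x y0] by (subst nn_integral_cmult) auto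
      also have "\<dots> = ennreal (?Psi v u)"
        using True by (simp add: ennreal_mult''[symmetric] D_def K_def)
      finally show ?thesis .
    qed auto
  qed
  also have "\<dots> = (\<integral>\<^sup>+v. \<integral>\<^sup>+q. ennreal (?Theta v q) \<partial>lborel \<partial>lborel)"
  proof (rule nn_integral_cong)
    fix v :: real
    show "(\<integral>\<^sup>+u. ennreal (?Psi v u) \<partial>lborel) = (\<integral>\<^sup>+q. ennreal (?Theta v q) \<partial>lborel)"
    proof (cases "v > 0")
      case True
      have "(\<integral>\<^sup>+u. ennreal (?Psi v u) \<partial>lborel) = ennreal \<bar>v\<bar> * (\<integral>\<^sup>+q. ennreal (?Psi v (0 + v * q)) \<partial>lborel)"
        using True by (intro nn_integral_real_affine) auto
      also have "\<dots> = (\<integral>\<^sup>+q. ennreal v * ennreal (?Psi v (0 + v * q)) \<partial>lborel)"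
        using True by (subst nn_integral_cmult) auto
      also have "\<dots> = (\<integral>\<^sup>+q. ennreal (?Theta v q) \<partial>lborel)"
      proof (intro nn_integral_cong)
        fix q :: real
        show "ennreal v * ennreal (?Psi v (0 + v * q)) = ennreal (?Theta v q)"
        proof (cases "q > 0")
          case q: True
          have vq: "v * q > 0" using True q by simp
          have I: "indicator {0<..} v = (1::real)" "indicator {0<..} (v * q) = (1::real)" "indicator {0<..} q = (1::real)"
            using True q vq by auto
          have e1: "(v *q) powr (b-1) = v powr (b-1) * q powr (b-1)" using True q by (simp add: powr_mult)
          have e2: "(pi/(v *q+v)) powr D = pi powr D * v powr (-D) * (1+q) powr (-D)"
          proof -
            have "v *q+v = v *(1+q)" by (simp add: algebra_simps)
            then show ?thesis using True q by (simp add: powr_divide powr_mult powr_minus_divide)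
          qed
          have e3: "v * v powr (a-1) * v powr (b-1) * v powr (-D) = v powr (D-1)"
          proof -
            have "v * v powr (a-1) * v powr (b-1) * v powr (-D) = v powr 1 * v powr (a-1) * v powr (b-1) * v powr (-D)"
              using True by simp
            also have "\<dots> = v powr (1 + (a-1) + (b-1) + (-D))"
              by (simp only: powr_add)
            also have "1 + (a-1) + (b-1) + (-D) = D - 1" using a(5) by simp
            finally show ?thesis .
          qed
          have e4: "exp (-(H * v)) * exp (-(v *q * v/(v *q+v)*K)) = exp (-((H + q*K/(1+q)) * v))"
          proof -
            have n1: "v *q+v = v * (1+q)" by (simp add: algebra_simps)
            have n2: "v \<noteq> 0" "1 + q \<noteq> 0" using True q by auto
            have "v *q * v/(v *q+v) = (v * (v *q))/(v * (1+q))" unfolding n1 by (simp add: mult_ac)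
            also have "\<dots> = v *q/(1+q)" using n2(1) by (rule nonzero_mult_divide_mult_cancel_left)
            finally have "v *q * v/(v *q+v) = v *q/(1+q)" .
            then show ?thesis by (simp add: exp_add[symmetric] field_simps)
          qed
          have "v * ?Psi v (0 + v * q) = (v * v powr (a-1) * v powr (b-1) * v powr (-D)) * pi powr D * q powr (b-1)
              * (1+q) powr (-D) * (exp (-(H * v)) * exp (-(v *q * v/(v *q+v)*K)))"
            by (simp only: add_0_left I e1 e2 mult_1_left mult_1_right) (simp only: mult_ac)
          also have "\<dots> = ?Theta v q" by (simp only: e3 e4) (simp only: I mult_1_left mult_ac)
          finally show ?thesis using True by (simp add: ennreal_mult''[symmetric])
        next
          case False
          then have "\<not> v * q > 0" using True by (simp add: zero_less_mult_iff)
          then show ?thesis using False by simp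
        qed
      qed
      finally show ?thesis .
    next
      case False
      then have iv: "indicator {0<..} v = (0::real)" by simp
      show ?thesis by (simp add: iv)
    qed
  qed
  also have "\<dots> = (\<integral>\<^sup>+q. \<integral>\<^sup>+v. ennreal (?Theta v q) \<partial>lborel \<partial>lborel)"
    by (rule swap_lb) measurable
  also have "\<dots> = (\<integral>\<^sup>+q. \<integral>\<^sup>+w. ennreal (?Xi q w) \<partial>lborel \<partial>lborel)"
  proof (rule nn_integral_cong)
    fix q :: real
    show "(\<integral>\<^sup>+v. ennreal (?Theta v q) \<partial>lborel) = (\<integral>\<^sup>+w. ennreal (?Xi q w) \<partial>lborel)"
    proof (cases "q > 0")
      case q: True
      define L where "L = H + q*K/(1+q)"
      define M where "M = H + q*(H+K)"
      have L: "L > 0" using H K q by (simp add: L_def add_pos_nonneg)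
      have M: "M > 0" using H K q by (simp add: M_def add_pos_nonneg)
      have LM: "(1+q) powr (-D) * L powr (-D) = M powr (-D)"
      proof -
        have "(1+q) * L = M" using q by (simp add: L_def M_def field_simps)
        then show ?thesis using q L by (simp add: powr_mult[symmetric])
      qed
      have "(\<integral>\<^sup>+v. ennreal (?Theta v q) \<partial>lborel) = (\<integral>\<^sup>+v. ennreal (pi powr D * q powr (b-1) * (1+q) powr (-D))
          * ennreal (indicator {0<..} v * (v powr (D-1) * exp (-(L * v)))) \<partial>lborel)"
        using q by (intro nn_integral_cong) (simp add: ennreal_mult''[symmetric] L_def mult_ac)
      also have "\<dots> = ennreal (pi powr D * q powr (b-1) * (1+q) powr (-D)) * ennreal (Gamma D * L powr (-D))"
        using a L by (subst nn_integral_cmult) (auto simp: gamma_nn)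
      also have "\<dots> = ennreal (pi powr D * q powr (b-1) * Gamma D * M powr (-D))"
        using q by (simp add: ennreal_mult''[symmetric] LM[symmetric] mult_ac)
      also have "\<dots> = ennreal (pi powr D * q powr (b-1)) * ennreal (Gamma D * M powr (-D))"
        using q by (simp add: ennreal_mult''[symmetric] mult_ac)
      also have "\<dots> = ennreal (pi powr D * q powr (b-1)) * (\<integral>\<^sup>+w. ennreal (indicator {0<..} w * (w powr (D-1) * exp (-(M * w)))) \<partial>lborel)"
        using a M by (simp add: gamma_nn)
      also have "\<dots> = (\<integral>\<^sup>+w. ennreal (pi powr D * q powr (b-1)) * ennreal (indicator {0<..} w * (w powr (D-1) * exp (-(M * w)))) \<partial>lborel)"
        by (subst nn_integral_cmult) auto
      also have "\<dots> = (\<integral>\<^sup>+w. ennreal (?Xi q w) \<partial>lborel)"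
      proof (intro nn_integral_cong)
        fix w :: real
        have "exp (-(M * w)) = exp (-(H*w)) * exp (-((w*(H+K)) * q))"
          by (simp add: M_def exp_add[symmetric] algebra_simps)
        then show "ennreal (pi powr D * q powr (b-1)) * ennreal (indicator {0<..} w * (w powr (D-1) * exp (-(M * w)))) = ennreal (?Xi q w)"
          using q by (simp add: ennreal_mult''[symmetric] mult_ac)
      qed
      finally show ?thesis .
    qed simp
  qed
  also have "\<dots> = (\<integral>\<^sup>+w. \<integral>\<^sup>+q. ennreal (?Xi q w) \<partial>lborel \<partial>lborel)"
    by (rule swap_lb) measurable
  also have "\<dots> = (\<integral>\<^sup>+w. ennreal (pi powr D * Gamma b * (H+K) powr (-b)) * ennreal (indicator {0<..} w * (w powr (D-b-1) * exp (-(H*w)))) \<partial>lborel)"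
  proof (intro nn_integral_cong)
    fix w :: real
    show "(\<integral>\<^sup>+q. ennreal (?Xi q w) \<partial>lborel) = ennreal (pi powr D * Gamma b * (H+K) powr (-b)) * ennreal (indicator {0<..} w * (w powr (D-b-1) * exp (-(H*w))))"
    proof (cases "w > 0")
      case w: True
      have HK: "w*(H+K) > 0" using w H K by simp
      have "(\<integral>\<^sup>+q. ennreal (?Xi q w) \<partial>lborel) = (\<integral>\<^sup>+q. ennreal (pi powr D * w powr (D-1) * exp (-(H*w)))
          * ennreal (indicator {0<..} q * (q powr (b-1) * exp (-((w*(H+K)) * q)))) \<partial>lborel)"
        using w by (intro nn_integral_cong) (simp add: ennreal_mult''[symmetric] mult_ac)
      also have "\<dots> = ennreal (pi powr D * w powr (D-1) * exp (-(H*w))) * ennreal (Gamma b * (w*(H+K)) powr (-b))"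
        using a HK by (subst nn_integral_cmult) (auto simp: gamma_nn)
      also have "\<dots> = ennreal (pi powr D * Gamma b * (H+K) powr (-b)) * ennreal (indicator {0<..} w * (w powr (D-b-1) * exp (-(H*w))))"
      proof -
        have "w powr (D-1) * (w*(H+K)) powr (-b) = w powr (D-b-1) * (H+K) powr (-b)"
        proof -
          have "w powr (D-1) * w powr (-b) = w powr (D-b-1)" by (subst powr_add[symmetric]) (simp add: algebra_simps)
          then show ?thesis using w H K by (simp add: powr_mult mult_ac)
        qed
        then have F: "w powr (D-1) * (w*(H+K)) powr (-b) = w powr (D-b-1) * (H+K) powr (-b)" .
        have Iw: "indicator {0<..} w = (1::real)" using w by simp
        have R: "(pi powr D * w powr (D-1) * exp (-(H*w))) * (Gamma b * (w*(H+K)) powr (-b))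
          = (pi powr D * Gamma b * (H+K) powr (-b)) * (indicator {0<..} w * (w powr (D-b-1) * exp (-(H*w))))"
        proof -
          have "(pi powr D * w powr (D-1) * exp (-(H*w))) * (Gamma b * (w*(H+K)) powr (-b))
              = pi powr D * Gamma b * exp (-(H*w)) * (w powr (D-1) * (w*(H+K)) powr (-b))" by (simp only: mult_ac)
          also have "\<dots> = pi powr D * Gamma b * exp (-(H*w)) * (w powr (D-b-1) * (H+K) powr (-b))" by (simp only: F)
          also have "\<dots> = (pi powr D * Gamma b * (H+K) powr (-b)) * (indicator {0<..} w * (w powr (D-b-1) * exp (-(H*w))))"
            by (simp only: Iw mult_1_left mult_ac)
          finally show ?thesis .
        qed
        have m1: "ennreal (pi powr D * w powr (D-1) * exp (-(H*w))) * ennreal (Gamma b * (w*(H+K)) powr (-b))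
           = ennreal ((pi powr D * w powr (D-1) * exp (-(H*w))) * (Gamma b * (w*(H+K)) powr (-b)))"
          using w H K a by (intro ennreal_mult''[symmetric]) simp
        have m2: "ennreal (pi powr D * Gamma b * (H+K) powr (-b)) * ennreal (indicator {0<..} w * (w powr (D-b-1) * exp (-(H*w))))
           = ennreal ((pi powr D * Gamma b * (H+K) powr (-b)) * (indicator {0<..} w * (w powr (D-b-1) * exp (-(H*w)))))"
          using w H K a by (intro ennreal_mult''[symmetric]) simp
        show ?thesis by (simp only: m1 m2 R)
      qed
      finally show ?thesis .
    qed simp
  qed
  also have "\<dots> = ennreal (pi powr D * Gamma b * (H+K) powr (-b)) * ennreal (Gamma (D-b) * H powr (-(D-b)))"
    using a H by (subst nn_integral_cmult) (auto simp: gamma_nn)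
  finally have "(\<integral>\<^sup>+t. ennreal (((norm (t-y0))^2 + H) powr (-a) * norm (x-t) powr (-s)) \<partial>lborel)
     = ennreal c1 * (ennreal (pi powr D * Gamma b * (H+K) powr (-b)) * ennreal (Gamma (D-b) * H powr (-(D-b))))" .
  also have "\<dots> = ennreal (pi powr D * Gamma (D-b) / Gamma a * (K+H) powr (-b) * H powr (-(D-b)))"
  proof -
    have Gb: "Gamma b \<noteq> 0" using Gamma_real_pos[OF a(2)] by linarith
    have Ga: "Gamma a \<noteq> 0" using Gamma_real_pos[OF a(1)] by linarith
    have m: "ennreal c1 * (ennreal (pi powr D * Gamma b * (H+K) powr (-b)) * ennreal (Gamma (D-b) * H powr (-(D-b))))
      = ennreal (c1 * ((pi powr D * Gamma b * (H+K) powr (-b)) * (Gamma (D-b) * H powr (-(D-b)))))"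
    proof -
      have X0: "0 \<le> pi powr D * Gamma b * (H+K) powr (-b)" using a by simp
      have Y0: "0 \<le> Gamma (D-b) * H powr (-(D-b))" using a by simp
      have c0: "0 \<le> c1" using a by (simp add: c1_def)
      have XY0: "0 \<le> (pi powr D * Gamma b * (H+K) powr (-b)) * (Gamma (D-b) * H powr (-(D-b)))" using X0 Y0 by simp
      show ?thesis by (simp only: ennreal_mult[OF c0 XY0] ennreal_mult[OF X0 Y0])
    qed
    have r: "c1 * ((pi powr D * Gamma b * (H+K) powr (-b)) * (Gamma (D-b) * H powr (-(D-b))))
      = pi powr D * Gamma (D-b) / Gamma a * (K+H) powr (-b) * H powr (-(D-b))"
      unfolding c1_def add.commute[of H K] by (rule r_alg[OF Gb Ga])
    show ?thesis unfolding m r ..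
  qed
  finally have calc0: "(\<integral>\<^sup>+t. ennreal (((norm (t-y0))^2 + H) powr (-a) * norm (x-t) powr (-s)) \<partial>lborel) = ennreal (pi powr D * Gamma (D-b) / Gamma a * (K+H) powr (-b) * H powr (-(D-b)))" .
  have e1: "s/2 = b" by (simp add: b_def)
  have e2: "real DIM('a) - b = a" by (simp add: a_def b_def)
  have e3: "(real DIM('a) - s)/2 = D - b" by (simp add: D_def b_def diff_divide_distrib)
  have e4: "real DIM('a)/2 = D" by (simp add: D_def)
  have e5: "(norm (x-y0))^2 + H = K + H" by (simp add: K_def)
  note calc = calc0
  show ?thesis unfolding e1 e2 e3 e4 e5 by (rule calc)
qed




lemma dim_vec: "DIM(real^'n) = CARD('n)" by simp

definition Cst :: "nat \<Rightarrow> real \<Rightarrow> real" where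
  "Cst d s = pi powr (d/2) * Gamma ((d-s)/2) / Gamma (d - s/2)"

lemma Cst_pos: "0 < s \<Longrightarrow> s < real d \<Longrightarrow> Cst d s > 0"
  unfolding Cst_def by (intro divide_pos_pos mult_pos_pos Gamma_real_pos) auto

lemma sqrt_powr: "(Z::real) > 0 \<Longrightarrow> sqrt Z powr p = Z powr (p/2)"
proof -
  assume Z: "Z > 0"
  have "sqrt Z = Z powr (1/2)" using Z by (simp add: powr_half_sqrt)
  then show ?thesis by (simp add: powr_powr)
qed

lemma sq_powr: "(h::real) \<noteq> 0 \<Longrightarrow> (h^2) powr (-(r/2)) * \<bar>h\<bar> powr r = 1"
proof -
  assume h: "h \<noteq> 0"
  have e: "h^2 = \<bar>h\<bar> powr 2" using h by simp
  have "(h^2) powr (-(r/2)) = (\<bar>h\<bar> powr 2) powr (-(r/2))" by (simp only: e)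
  also have "\<dots> = \<bar>h\<bar> powr (2 * (-(r/2)))" by (rule powr_powr)
  finally have "(h^2) powr (-(r/2)) = \<bar>h\<bar> powr (-r)" by simp
  then show ?thesis using h by (simp add: powr_add[symmetric])
qed

lemma omegaW_pos:
  assumes "CARD('n) \<ge> 2" "0 < s" "s < real CARD('n)"
  shows "omega_d CARD('n) * W_sphere CARD('n) s > 0"
  using const_eq[of "CARD('n)" s] assms Cst_pos[of s "CARD('n)"] unfolding Cst_def by simp

lemma bal_nonneg:
  assumes "CARD('n) \<ge> 2" "0 < s" "s < real CARD('n)"
  shows "0 \<le> bal_density s y (x::real^'n)"
  using omegaW_pos[OF assms] unfolding bal_density_def by simp

lemma bal_zero: "snd y = 0 \<Longrightarrow> bal_density s y (x::real^'n) = 0"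
  unfolding bal_density_def by simp

lemma bal_eq:
  fixes y :: "(real^'n) \<times> real" and x :: "real^'n" and s :: real
  assumes d: "CARD('n) \<ge> 2" and s: "0 < s" "s < real CARD('n)" and h: "snd y \<noteq> 0"
  shows "bal_density s y x = \<bar>snd y\<bar> powr (CARD('n) - s) / Cst CARD('n) s
     * ((norm (x - fst y))^2 + (snd y)^2) powr (-(CARD('n) - s/2))"
proof -
  obtain y0 h where y: "y = (y0, h)" by force
  define Z where "Z = (norm (x - y0))^2 + h^2"
  have Z: "Z > 0" using h y by (simp add: Z_def add_nonneg_pos)
  have "dist (emb x) y = sqrt ((dist x y0)^2 + (dist 0 h)^2)" unfolding y emb_def by (rule dist_Pair_Pair)
  then have dist: "dist (emb x) y = sqrt Z" by (simp add: Z_def dist_norm)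
  have p1: "dist (emb x) y powr (2 * real CARD('n) - s) = Z powr (CARD('n) - s/2)"
    unfolding dist using Z by (simp add: sqrt_powr field_simps)
  have p2: "(2 * \<bar>h\<bar>) powr (real CARD('n) - s) = 2 powr (real CARD('n) - s) * \<bar>h\<bar> powr (real CARD('n) - s)"
    by (simp add: powr_mult)
  have ce: "omega_d CARD('n) * W_sphere CARD('n) s = 2 powr (real CARD('n) - s) * Cst CARD('n) s"
    using const_eq[of "CARD('n)" s] d s unfolding Cst_def by simp
  have C: "Cst CARD('n) s > 0" using Cst_pos s by blast
  have "bal_density s y x = 2 powr (real CARD('n) - s) * \<bar>h\<bar> powr (real CARD('n) - s) /
     (2 powr (real CARD('n) - s) * Cst CARD('n) s * Z powr (CARD('n) - s/2))"
    unfolding bal_density_def p1 ce[symmetric] by (simp add: y p2)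
  also have "\<dots> = \<bar>h\<bar> powr (CARD('n) - s) / Cst CARD('n) s * Z powr (-(CARD('n) - s/2))"
    using C Z by (simp add: powr_minus_divide field_simps)
  finally show ?thesis by (simp add: y Z_def)
qed

lemma dist_emb_meas[measurable]: "(\<lambda>p. dist (emb (fst p)) (snd p :: (real^'n) \<times> real)) \<in> borel_measurable (borel \<Otimes>\<^sub>M borel)"
proof -
  have "continuous_on UNIV (\<lambda>p. dist (emb (fst p)) (snd p :: (real^'n) \<times> real))"
    unfolding emb_def by (intro continuous_intros)
  then have "(\<lambda>p. dist (emb (fst p)) (snd p :: (real^'n) \<times> real)) \<in> borel_measurable borel"
    by (rule borel_measurable_continuous_onI)
  then show ?thesis by (simp add: borel_prod)
qed

lemma snd_snd_meas[measurable]: "(\<lambda>p. snd (snd p)) \<in> borel_measurable ((borel \<Otimes>\<^sub>M borel) :: ((real^'n) \<times> ((real^'n) \<times> real)) measure)"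
proof -
  have "continuous_on UNIV (\<lambda>p::((real^'n) \<times> ((real^'n) \<times> real)). snd (snd p))" by (intro continuous_intros)
  then have "(\<lambda>p::((real^'n) \<times> ((real^'n) \<times> real)). snd (snd p)) \<in> borel_measurable borel"
    by (rule borel_measurable_continuous_onI)
  then show ?thesis by (simp add: borel_prod)
qed

lemma bal_meas[measurable]: "(\<lambda>p. bal_density s (snd p) (fst p :: real^'n)) \<in> borel_measurable (borel \<Otimes>\<^sub>M borel)"
  unfolding bal_density_def by measurable

lemma rk_meas[measurable]: "riesz_kernel s (x::'a::{metric_space, second_countable_topology}) \<in> borel_measurable borel"
proof -
  have e: "riesz_kernel s x = (\<lambda>t. if t \<in> {x} then \<infinity> else ennreal (dist x t powr (-s)))"
    by (auto simp: fun_eq_iff riesz_kernel_def)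
  show ?thesis unfolding e by (intro measurable_If_set) auto
qed


lemma mass_bal:
  fixes y :: "(real^'n) \<times> real" and s :: real
  assumes d: "CARD('n) \<ge> 2" and s: "0 < s" "s < real CARD('n)" and h: "snd y \<noteq> 0"
  shows "(\<integral>\<^sup>+x. ennreal (bal_density s y x) \<partial>lborel) = 1"
proof -
  obtain y0 h where y: "y = (y0, h)" by force
  have h0: "h \<noteq> 0" using h y by simp
  define c where "c = \<bar>h\<bar> powr (real CARD('n) - s) / Cst CARD('n) s"
  have C: "Cst CARD('n) s > 0" using Cst_pos s by blast
  have c: "c \<ge> 0" using C by (simp add: c_def)
  have "(\<integral>\<^sup>+x. ennreal (bal_density s y x) \<partial>lborel)
     = (\<integral>\<^sup>+x. ennreal c * ennreal (((norm (x-y0))^2 + h^2) powr (-(real CARD('n) - s/2))) \<partial>lborel)"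
  proof (rule nn_integral_cong)
    fix t
    have b: "bal_density s y t = c * ((norm (t-y0))^2 + h^2) powr (-(real CARD('n) - s/2))"
      using bal_eq[OF d s h, of t] by (simp add: y c_def)
    show "ennreal (bal_density s y t) = ennreal c * ennreal (((norm (t-y0))^2 + h^2) powr (-(real CARD('n) - s/2)))"
      unfolding b using c by (simp add: ennreal_mult)
  qed
  also have "\<dots> = ennreal c * (\<integral>\<^sup>+x. ennreal (((norm (x-y0))^2 + h^2) powr (-(real CARD('n) - s/2))) \<partial>lborel)"
    by (rule nn_integral_cmult) measurable
  also have "(\<integral>\<^sup>+x. ennreal (((norm (x-y0))^2 + h^2) powr (-(real CARD('n) - s/2))) \<partial>lborel)
     = ennreal (Cst CARD('n) s * (h^2) powr (-((real CARD('n) - s)/2)))"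
    using mass_core[where 'a="real^'n", of s "h^2" y0] s h0 unfolding dim_vec Cst_def by simp
  also have "ennreal c * ennreal (Cst CARD('n) s * (h^2) powr (-((real CARD('n) - s)/2))) = ennreal (c * (Cst CARD('n) s * (h^2) powr (-((real CARD('n) - s)/2))))"
    using c C by (intro ennreal_mult[symmetric]) auto
  also have "c * (Cst CARD('n) s * (h^2) powr (-((real CARD('n) - s)/2))) = (h^2) powr (-((real CARD('n) - s)/2)) * \<bar>h\<bar> powr (real CARD('n) - s)"
    using C by (simp add: c_def)
  also have "\<dots> = 1" by (rule sq_powr[OF h0])
  finally show ?thesis by simp
qed

lemma pot_bal:
  fixes y :: "(real^'n) \<times> real" and s :: real and x :: "real^'n"
  assumes d: "CARD('n) \<ge> 2" and s: "0 < s" "s < real CARD('n)" and h: "snd y \<noteq> 0"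
  shows "(\<integral>\<^sup>+t. ennreal (bal_density s y t) * riesz_kernel s x t \<partial>lborel) = riesz_kernel s (emb x) y"
proof -
  obtain y0 h where y: "y = (y0, h)" by force
  have h0: "h \<noteq> 0" using h y by simp
  define c where "c = \<bar>h\<bar> powr (real CARD('n) - s) / Cst CARD('n) s"
  have C: "Cst CARD('n) s > 0" using Cst_pos s by blast
  have c: "c \<ge> 0" using C by (simp add: c_def)
  define K where "K = (norm (x-y0))^2"
  have KH: "K + h^2 > 0" using h0 by (simp add: K_def add_nonneg_pos)
  have "(\<integral>\<^sup>+t. ennreal (bal_density s y t) * riesz_kernel s x t \<partial>lborel)
     = (\<integral>\<^sup>+t. ennreal c * ennreal (((norm (t-y0))^2 + h^2) powr (-(real CARD('n) - s/2)) * norm (x-t) powr (-s)) \<partial>lborel)"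
  proof (rule nn_integral_cong_AE)
    show "AE t in lborel. ennreal (bal_density s y t) * riesz_kernel s x t
       = ennreal c * ennreal (((norm (t-y0))^2 + h^2) powr (-(real CARD('n) - s/2)) * norm (x-t) powr (-s))"
    proof (rule eventually_mono[OF AE_lborel_singleton[of x]])
      fix t assume tx: "t \<noteq> x"
      have rk: "riesz_kernel s x t = ennreal (norm (x-t) powr (-s))"
        using tx by (simp add: riesz_kernel_def dist_norm)
      have b: "bal_density s y t = c * ((norm (t-y0))^2 + h^2) powr (-(real CARD('n) - s/2))"
        using bal_eq[OF d s h, of t] by (simp add: y c_def)
      show "ennreal (bal_density s y t) * riesz_kernel s x t
       = ennreal c * ennreal (((norm (t-y0))^2 + h^2) powr (-(real CARD('n) - s/2)) * norm (x-t) powr (-s))"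
        unfolding rk b using c by (simp add: ennreal_mult mult.assoc)
    qed
  qed
  also have "\<dots> = ennreal c * (\<integral>\<^sup>+t. ennreal (((norm (t-y0))^2 + h^2) powr (-(real CARD('n) - s/2)) * norm (x-t) powr (-s)) \<partial>lborel)"
    by (rule nn_integral_cmult) measurable
  also have "(\<integral>\<^sup>+t. ennreal (((norm (t-y0))^2 + h^2) powr (-(real CARD('n) - s/2)) * norm (x-t) powr (-s)) \<partial>lborel)
     = ennreal (Cst CARD('n) s * (K + h^2) powr (-(s/2)) * (h^2) powr (-((real CARD('n) - s)/2)))"
    using pot_core[where 'a="real^'n", of s "h^2" y0 x] s h0 unfolding dim_vec Cst_def K_def by simp
  also have "ennreal c * ennreal (Cst CARD('n) s * (K + h^2) powr (-(s/2)) * (h^2) powr (-((real CARD('n) - s)/2)))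
     = ennreal (c * (Cst CARD('n) s * (K + h^2) powr (-(s/2)) * (h^2) powr (-((real CARD('n) - s)/2))))"
    using c C by (intro ennreal_mult[symmetric]) auto
  also have "c * (Cst CARD('n) s * (K + h^2) powr (-(s/2)) * (h^2) powr (-((real CARD('n) - s)/2)))
     = (K + h^2) powr (-(s/2)) * ((h^2) powr (-((real CARD('n) - s)/2)) * \<bar>h\<bar> powr (real CARD('n) - s))"
    using C by (simp add: c_def)
  also have "\<dots> = (K + h^2) powr (-(s/2))" by (simp add: sq_powr[OF h0])
  also have "ennreal \<dots> = riesz_kernel s (emb x) y"
  proof -
    have ne: "emb x \<noteq> y" using h0 by (simp add: y emb_def)
    have "dist (emb x) y = sqrt ((dist x y0)^2 + (dist 0 h)^2)" unfolding y emb_def by (rule dist_Pair_Pair)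
    then have dist: "dist (emb x) y = sqrt (K + h^2)" by (simp add: K_def dist_norm)
    show ?thesis using ne KH by (simp add: riesz_kernel_def dist sqrt_powr)
  qed
  finally show ?thesis .
qed

lemma rk_empty: "riesz_cap_zero s {}"
  unfolding riesz_cap_zero_def by auto

lemma bal_meas_y: "(\<lambda>y. bal_density s y (x::real^'n)) \<in> borel_measurable borel"
proof -
  have pm: "(\<lambda>y::(real^'n) \<times> real. (x, y)) \<in> borel \<rightarrow>\<^sub>M (borel \<Otimes>\<^sub>M borel)" by measurable
  have "(\<lambda>p. bal_density s (snd p) (fst p)) \<circ> (\<lambda>y. (x, y)) \<in> borel_measurable borel"
    by (rule measurable_comp[OF pm bal_meas])
  then show ?thesis by (simp add: o_def)
qed

lemma bal_meas_x: "(\<lambda>t. bal_density s (y :: (real^'n) \<times> real) (t::real^'n)) \<in> borel_measurable borel"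
proof -
  have pm: "(\<lambda>t::real^'n. (t, y)) \<in> borel \<rightarrow>\<^sub>M (borel \<Otimes>\<^sub>M borel)" by measurable
  have "(\<lambda>p. bal_density s (snd p) (fst p)) \<circ> (\<lambda>t. (t, y)) \<in> borel_measurable borel"
    by (rule measurable_comp[OF pm bal_meas])
  then show ?thesis by (simp add: o_def)
qed

lemma supp_null:
  fixes \<nu> :: "((real^'n) \<times> real) measure"
  assumes sets: "sets \<nu> = sets borel" and supp: "msupport \<nu> \<inter> range emb = {}"
  shows "AE y in \<nu>. snd y \<noteq> 0"
proof -
  let ?F = "{U. open U \<and> emeasure \<nu> U = 0}"
  obtain F' where F': "F' \<subseteq> ?F" "countable F'" "\<Union>F' = \<Union>?F"
    using Lindelof[of ?F] by blast
  have sub: "{y. snd y = 0} \<subseteq> \<Union>?F"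
  proof
    fix y :: "(real^'n) \<times> real" assume "y \<in> {y. snd y = 0}"
    then have "y = emb (fst y)" by (cases y) (simp add: emb_def)
    then have "y \<notin> msupport \<nu>" using supp by (metis IntI empty_iff rangeI)
    then obtain U where "open U" "y \<in> U" "\<not> emeasure \<nu> U > 0" unfolding msupport_def by auto
    then show "y \<in> \<Union>?F" by (auto simp: not_less)
  qed
  have null: "(\<Union>U\<in>F'. U) \<in> null_sets \<nu>"
  proof (rule null_sets_UN')
    show "countable F'" by fact
    fix U assume "U \<in> F'"
    then have "open U" "emeasure \<nu> U = 0" using F'(1) by auto
    then show "U \<in> null_sets \<nu>" using sets by (auto simp: null_sets_def)
  qed
  show ?thesis
  proof (rule AE_I'[OF null])
    show "{x \<in> space \<nu>. \<not> snd x \<noteq> 0} \<subseteq> (\<Union>U\<in>F'. U)" using sub F'(3) by auto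
  qed
qed

lemma part2:
  fixes \<nu> :: "((real^'n) \<times> real) measure" and s :: real
  assumes d: "CARD('n) \<ge> 2" and s: "0 < s" "s < real CARD('n)"
    and sets: "sets \<nu> = sets borel" and fin: "emeasure \<nu> UNIV < \<infinity>" and supp: "msupport \<nu> \<inter> range emb = {}"
  shows "weak_balayage s \<nu> (density lborel (\<lambda>x. \<integral>\<^sup>+y. ennreal (bal_density s y x) \<partial>\<nu>))"
    and "\<And>A. A \<in> sets borel \<Longrightarrow> emeasure (density lborel (\<lambda>x. \<integral>\<^sup>+y. ennreal (bal_density s y x) \<partial>\<nu>)) A < \<infinity>"
    and "\<And>A. A \<in> sets borel \<Longrightarrow> set_integrable lborel A (\<lambda>x. \<integral>y. bal_density s y x \<partial>\<nu>)"
    and "\<And>A. A \<in> sets borel \<Longrightarrow> measure (density lborel (\<lambda>x. \<integral>\<^sup>+y. ennreal (bal_density s y x) \<partial>\<nu>)) A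
           = (LINT x:A|lborel. \<integral>y. bal_density s y x \<partial>\<nu>)"
proof -
  define G where "G = (\<lambda>x. \<integral>\<^sup>+y. ennreal (bal_density s y x) \<partial>\<nu>)"
  have sp: "space \<nu> = UNIV" using sets_eq_imp_space_eq[OF sets] by simp
  have fm: "finite_measure \<nu>" using fin sp by (intro finite_measureI) auto
  then have sf: "sigma_finite_measure \<nu>" by (rule finite_measure.axioms)
  have psf: "pair_sigma_finite lborel \<nu>"
    using sf by (intro pair_sigma_finite.intro) (auto simp: lborel.sigma_finite_measure_axioms)
  have PM: "sets (lborel \<Otimes>\<^sub>M \<nu>) = sets (borel \<Otimes>\<^sub>M borel)"
    using sets by (intro sets_pair_measure_cong) auto
  have bm: "(\<lambda>p. bal_density s (snd p) (fst p :: real^'n)) \<in> borel_measurable (lborel \<Otimes>\<^sub>M \<nu>)"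
    using bal_meas[of s] by (simp add: measurable_cong_sets[OF PM refl])
  have bm2: "(\<lambda>(x, y). ennreal (bal_density s y (x :: real^'n))) \<in> borel_measurable (lborel \<Otimes>\<^sub>M \<nu>)"
    using bm by (simp add: case_prod_beta')
  have Gm: "G \<in> borel_measurable lborel"
    unfolding G_def using sigma_finite_measure.borel_measurable_nn_integral[OF sf bm2] by simp
  have bmy: "(\<lambda>y. bal_density s y x) \<in> borel_measurable \<nu>" for x :: "real^'n"
    using bal_meas_y[of s x] by (simp add: measurable_cong_sets[OF sets refl])
  have nn: "\<And>y x. 0 \<le> bal_density s y (x::real^'n)" using bal_nonneg[OF d s] by blast
  have AEs: "AE y in \<nu>. snd y \<noteq> 0" by (rule supp_null[OF sets supp])
  have TG: "(\<integral>\<^sup>+x. G x \<partial>lborel) = emeasure \<nu> UNIV"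
  proof -
    have "(\<integral>\<^sup>+x. G x \<partial>lborel) = (\<integral>\<^sup>+y. \<integral>\<^sup>+x. ennreal (bal_density s y x) \<partial>lborel \<partial>\<nu>)"
      unfolding G_def by (rule pair_sigma_finite.Fubini'[OF psf bm2, symmetric])
    also have "\<dots> = (\<integral>\<^sup>+y. 1 \<partial>\<nu>)"
      by (rule nn_integral_cong_AE, rule eventually_mono[OF AEs]) (simp add: mass_bal[OF d s])
    also have "\<dots> = emeasure \<nu> UNIV" using sp by simp
    finally show ?thesis .
  qed
  have Gfin: "AE x in lborel. G x \<noteq> \<infinity>"
    using Gm TG fin by (intro nn_integral_PInf_AE) auto
  have FG: "(\<integral>y. bal_density s y x \<partial>\<nu>) = enn2real (G x)" for x
    unfolding G_def using bmy nn by (intro integral_eq_nn_integral) auto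
  have pot: "riesz_pot s (density lborel G) x = riesz_pot s \<nu> (emb x)" for x :: "real^'n"
  proof -
    have rkm: "riesz_kernel s x \<in> borel_measurable lborel" using rk_meas by simp
    have "riesz_pot s (density lborel G) x = (\<integral>\<^sup>+t. G t * riesz_kernel s x t \<partial>lborel)"
      unfolding riesz_pot_def using Gm rkm by (rule nn_integral_density)
    also have "\<dots> = (\<integral>\<^sup>+t. \<integral>\<^sup>+y. ennreal (bal_density s y t) * riesz_kernel s x t \<partial>\<nu> \<partial>lborel)"
      unfolding G_def using bmy by (intro nn_integral_cong nn_integral_multc[symmetric]) auto
    also have "\<dots> = (\<integral>\<^sup>+y. \<integral>\<^sup>+t. ennreal (bal_density s y t) * riesz_kernel s x t \<partial>lborel \<partial>\<nu>)"
    proof (rule pair_sigma_finite.Fubini'[OF psf, symmetric])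
      have "(\<lambda>p. riesz_kernel s x (fst p :: real^'n)) \<in> borel_measurable (lborel \<Otimes>\<^sub>M \<nu>)"
        using rk_meas[of s x] by measurable
      then show "(\<lambda>(t, y). ennreal (bal_density s y t) * riesz_kernel s x t) \<in> borel_measurable (lborel \<Otimes>\<^sub>M \<nu>)"
        using bm by (simp add: case_prod_beta')
    qed
    also have "\<dots> = (\<integral>\<^sup>+y. riesz_kernel s (emb x) y \<partial>\<nu>)"
      by (rule nn_integral_cong_AE, rule eventually_mono[OF AEs]) (simp add: pot_bal[OF d s])
    also have "\<dots> = riesz_pot s \<nu> (emb x)" by (simp add: riesz_pot_def)
    finally show ?thesis .
  qed
  show "weak_balayage s \<nu> (density lborel (\<lambda>x. \<integral>\<^sup>+y. ennreal (bal_density s y x) \<partial>\<nu>))"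
    unfolding G_def[symmetric] weak_balayage_def using pot by (simp add: rk_empty)
  show fA: "emeasure (density lborel (\<lambda>x. \<integral>\<^sup>+y. ennreal (bal_density s y x) \<partial>\<nu>)) A < \<infinity>" if A: "A \<in> sets borel" for A
  proof -
    have "emeasure (density lborel G) A \<le> emeasure (density lborel G) UNIV"
      by (rule emeasure_mono) auto
    also have "\<dots> = (\<integral>\<^sup>+x. G x \<partial>lborel)" using Gm by (simp add: emeasure_density)
    finally show ?thesis using TG fin unfolding G_def by simp
  qed
  have hb: "has_bochner_integral lborel (\<lambda>x. indicator A x *\<^sub>R (\<integral>y. bal_density s y x \<partial>\<nu>))
      (measure (density lborel G) A)" if A: "A \<in> sets borel" for A
  proof (rule has_bochner_integral_nn_integral)
    show "(\<lambda>x. indicator A x *\<^sub>R (\<integral>y. bal_density s y x \<partial>\<nu>)) \<in> borel_measurable lborel"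
      unfolding FG using Gm A by measurable
    show "AE x in lborel. 0 \<le> indicator A x *\<^sub>R (\<integral>y. bal_density s y x \<partial>\<nu>)"
      unfolding FG by simp
    show "0 \<le> measure (density lborel G) A" by simp
    have "(\<integral>\<^sup>+x. ennreal (indicator A x *\<^sub>R (\<integral>y. bal_density s y x \<partial>\<nu>)) \<partial>lborel)
        = (\<integral>\<^sup>+x. G x * indicator A x \<partial>lborel)"
    proof (rule nn_integral_cong_AE, rule eventually_mono[OF Gfin])
      fix x assume "G x \<noteq> \<infinity>"
      then show "ennreal (indicator A x *\<^sub>R (\<integral>y. bal_density s y x \<partial>\<nu>)) = G x * indicator A x"
        unfolding FG by (auto simp: indicator_def top.not_eq_extremum)
    qed
    also have "\<dots> = emeasure (density lborel G) A" using Gm A by (simp add: emeasure_density)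
    also have "\<dots> = ennreal (measure (density lborel G) A)"
      using fA[OF A] unfolding G_def[symmetric] by (simp add: emeasure_eq_ennreal_measure)
    finally show "(\<integral>\<^sup>+x. ennreal (indicator A x *\<^sub>R (\<integral>y. bal_density s y x \<partial>\<nu>)) \<partial>lborel) = ennreal (measure (density lborel G) A)" .
  qed
  show "set_integrable lborel A (\<lambda>x. \<integral>y. bal_density s y x \<partial>\<nu>)" if A: "A \<in> sets borel" for A
    unfolding set_integrable_def using hb[OF A] by (simp add: has_bochner_integral_iff)
  show "measure (density lborel (\<lambda>x. \<integral>\<^sup>+y. ennreal (bal_density s y x) \<partial>\<nu>)) A
           = (LINT x:A|lborel. \<integral>y. bal_density s y x \<partial>\<nu>)" if A: "A \<in> sets borel" for A
    unfolding set_lebesgue_integral_def G_def[symmetric] using hb[OF A] by (simp add: has_bochner_integral_integral_eq)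
qed


theorem lemma3p11:
  assumes "CARD('n) \<ge> 2" and "0 < s" and "s < real CARD('n)"
  shows "(\<forall>y :: (real^'n) \<times> real. snd y \<noteq> 0 \<longrightarrow>
            weak_balayage s (return borel y) (delta_w s y) \<and>
            emeasure (delta_w s y) UNIV = 1)
       \<and> (\<forall>(\<nu>p :: ((real^'n) \<times> real) measure) (\<nu>m :: ((real^'n) \<times> real) measure).
            sets \<nu>p = sets borel \<and> sets \<nu>m = sets borel \<and>
            emeasure \<nu>p UNIV < \<infinity> \<and> emeasure \<nu>m UNIV < \<infinity> \<and>
            (\<exists>N \<in> sets borel. emeasure \<nu>p N = 0 \<and> emeasure \<nu>m (UNIV - N) = 0) \<and>
            (msupport \<nu>p \<union> msupport \<nu>m) \<inter> range emb = {}
          \<longrightarrow> (\<exists>\<mu>p \<mu>m. weak_balayage s \<nu>p \<mu>p \<and> weak_balayage s \<nu>m \<mu>m \<and>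
                 (\<forall>A \<in> sets borel. emeasure \<mu>p A < \<infinity> \<and> emeasure \<mu>m A < \<infinity> \<and>
                    measure \<mu>p A - measure \<mu>m A =
                    (LINT x:A|lborel. (\<integral>y. bal_density s y x \<partial>\<nu>p) - (\<integral>y. bal_density s y x \<partial>\<nu>m)))))"
proof -
  have d: "CARD('n) \<ge> 2" and s: "0 < s" "s < real CARD('n)" using assms by auto
  have P1: "weak_balayage s (return borel y) (delta_w s y) \<and> emeasure (delta_w s y) UNIV = 1"
    if h: "snd y \<noteq> 0" for y :: "(real^'n) \<times> real"
  proof
    have fm: "(\<lambda>t. ennreal (bal_density s y t)) \<in> borel_measurable lborel"
      using bal_meas_x[of s y] by simp
    have pot: "riesz_pot s (delta_w s y) x = riesz_pot s (return borel y) (emb x)" for x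
    proof -
      have rkm: "riesz_kernel s x \<in> borel_measurable lborel" using rk_meas by simp
      have "riesz_pot s (delta_w s y) x = (\<integral>\<^sup>+t. ennreal (bal_density s y t) * riesz_kernel s x t \<partial>lborel)"
        unfolding riesz_pot_def delta_w_def using fm rkm by (rule nn_integral_density)
      also have "\<dots> = riesz_kernel s (emb x) y" by (rule pot_bal[OF d s h])
      also have "\<dots> = riesz_pot s (return borel y) (emb x)"
        unfolding riesz_pot_def by (rule nn_integral_return[symmetric]) (auto intro: rk_meas)
      finally show ?thesis .
    qed
    show "weak_balayage s (return borel y) (delta_w s y)"
      unfolding weak_balayage_def using pot by (simp add: rk_empty delta_w_def)
    show "emeasure (delta_w s y) UNIV = 1"
      unfolding delta_w_def using fm by (simp add: emeasure_density mass_bal[OF d s h])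
  qed
  have P2: "\<exists>\<mu>p \<mu>m. weak_balayage s \<nu>p \<mu>p \<and> weak_balayage s \<nu>m \<mu>m \<and>
                 (\<forall>A \<in> sets borel. emeasure \<mu>p A < \<infinity> \<and> emeasure \<mu>m A < \<infinity> \<and>
                    measure \<mu>p A - measure \<mu>m A =
                    (LINT x:A|lborel. (\<integral>y. bal_density s y x \<partial>\<nu>p) - (\<integral>y. bal_density s y x \<partial>\<nu>m)))"
    if H: "sets \<nu>p = sets borel" "sets \<nu>m = sets borel" "emeasure \<nu>p UNIV < \<infinity>" "emeasure \<nu>m UNIV < \<infinity>"
      "(msupport \<nu>p \<union> msupport \<nu>m) \<inter> range emb = {}"
    for \<nu>p \<nu>m :: "((real^'n) \<times> real) measure"
  proof -
    have sp: "msupport \<nu>p \<inter> range emb = {}" "msupport \<nu>m \<inter> range emb = {}" using H(5) by auto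
    note Pp = part2[OF d s H(1) H(3) sp(1)]
    note Pm = part2[OF d s H(2) H(4) sp(2)]
    show ?thesis
    proof (intro exI conjI ballI)
      show "weak_balayage s \<nu>p (density lborel (\<lambda>x. \<integral>\<^sup>+y. ennreal (bal_density s y x) \<partial>\<nu>p))" by (rule Pp(1))
      show "weak_balayage s \<nu>m (density lborel (\<lambda>x. \<integral>\<^sup>+y. ennreal (bal_density s y x) \<partial>\<nu>m))" by (rule Pm(1))
      fix A :: "(real^'n) set" assume A: "A \<in> sets borel"
      show "emeasure (density lborel (\<lambda>x. \<integral>\<^sup>+y. ennreal (bal_density s y x) \<partial>\<nu>p)) A < \<infinity>" by (rule Pp(2)[OF A])
      show "emeasure (density lborel (\<lambda>x. \<integral>\<^sup>+y. ennreal (bal_density s y x) \<partial>\<nu>m)) A < \<infinity>" by (rule Pm(2)[OF A])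
      show "measure (density lborel (\<lambda>x. \<integral>\<^sup>+y. ennreal (bal_density s y x) \<partial>\<nu>p)) A
          - measure (density lborel (\<lambda>x. \<integral>\<^sup>+y. ennreal (bal_density s y x) \<partial>\<nu>m)) A
          = (LINT x:A|lborel. (\<integral>y. bal_density s y x \<partial>\<nu>p) - (\<integral>y. bal_density s y x \<partial>\<nu>m))"
        unfolding Pp(4)[OF A] Pm(4)[OF A] by (rule set_integral_diff(2)[OF Pp(3)[OF A] Pm(3)[OF A], symmetric])
    qed
  qed
  show ?thesis using P1 P2 by blast
qed


end
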